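(* Let $F$ be a field and let $M$ be a root-closed Puiseux monoid. Then $F[M]$ is a U-UFD: whenever $g_1\cdots g_k=h_1\cdots h_\ell$ with all $g_i,h_j$ irreducible in $F[M]$, one has $k=\ell$ and there is a permutation $\sigma$ of $\{1,\dots,k\}$ such that $g_i$ and $h_{\sigma(i)}$ are associates for every $i$.
   Context: A Puiseux monoid is an additive submonoid of $(\mathbb{Q}_{\ge 0},+)$; $F[M]$ is its semigroup algebra over $F$ (finite formal sums $\sum_{s\in M} f(s)X^s$ with $X^sX^t=X^{s+t}$), an integral domain with units $F^\times$. $\mathsf{gp}(M)=\{x-y\mid x,y\in M\}$; $x\in\mathsf{gp}(M)$ is a root element if $nx\in M$ for some $n\in\mathbb{N}$; $M$ is root-closed if all root elements lie in $M$. An integral domain is an unrestricted unique factorization domain (U-UFD) if every element that admits a factorization into irreducibles has a unique such factorization up to order and associates. *)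

theory Defs
  imports Complex_Main "HOL-Library.Poly_Mapping" "HOL-Combinatorics.Permutations"
begin

definition puiseux_monoid :: "rat set \<Rightarrow> bool" where
  "puiseux_monoid M \<longleftrightarrow> M \<subseteq> {q. 0 \<le> q} \<and> 0 \<in> M \<and> (\<forall>x\<in>M. \<forall>y\<in>M. x + y \<in> M)"

definition gp :: "rat set \<Rightarrow> rat set" where
  "gp M = {x - y | x y. x \<in> M \<and> y \<in> M}"

definition root_closed :: "rat set \<Rightarrow> bool" where
  "root_closed M \<longleftrightarrow> (\<forall>x\<in>gp M. (\<exists>n::nat. n \<ge> 1 \<and> of_nat n * x \<in> M) \<longrightarrow> x \<in> M)"

text \<open>Semigroup algebra F[M]: finitely supported functions with support in M,
  multiplication is convolution (the multiplication of poly_mapping), so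
  the monomial X^s is Poly_Mapping.single s 1.\<close>
definition sg_alg :: "rat set \<Rightarrow> (rat \<Rightarrow>\<^sub>0 'a::field) set" where
  "sg_alg M = {p. Poly_Mapping.keys p \<subseteq> M}"

definition sg_unit :: "rat set \<Rightarrow> (rat \<Rightarrow>\<^sub>0 'a::field) \<Rightarrow> bool" where
  "sg_unit M u \<longleftrightarrow> u \<in> sg_alg M \<and> (\<exists>v\<in>sg_alg M. u * v = 1)"

definition sg_irreducible :: "rat set \<Rightarrow> (rat \<Rightarrow>\<^sub>0 'a::field) \<Rightarrow> bool" where
  "sg_irreducible M a \<longleftrightarrow> a \<in> sg_alg M \<and> a \<noteq> 0 \<and> \<not> sg_unit M a \<and>
     (\<forall>b\<in>sg_alg M. \<forall>c\<in>sg_alg M. a = b * c \<longrightarrow> sg_unit M b \<or> sg_unit M c)"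

definition sg_associated :: "rat set \<Rightarrow> (rat \<Rightarrow>\<^sub>0 'a::field) \<Rightarrow> (rat \<Rightarrow>\<^sub>0 'a) \<Rightarrow> bool" where
  "sg_associated M a b \<longleftrightarrow> a \<in> sg_alg M \<and> b \<in> sg_alg M \<and> (\<exists>u. sg_unit M u \<and> b = u * a)"

end

theory Submission imports Defs "HOL-Computational_Algebra.Polynomial_Factorial" begin

definition emb :: "rat \<Rightarrow> 'a::field poly \<Rightarrow> (rat \<Rightarrow>\<^sub>0 'a)" where
  "emb e p = (\<Sum>i\<le>degree p. Poly_Mapping.single (of_nat i * e) (coeff p i))"

lemma emb_lookup_in:
  assumes "e \<noteq> 0" shows "Poly_Mapping.lookup (emb e p) (of_nat j * e) = coeff p j"
proof -
  have "Poly_Mapping.lookup (emb e p) (of_nat j * e) = (\<Sum>i\<le>degree p. (if i = j then coeff p i else 0))"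
    unfolding emb_def lookup_sum lookup_single using assms
    by (intro sum.cong) (auto simp: when_def)
  also have "\<dots> = coeff p j" by (simp add: coeff_eq_0)
  finally show ?thesis .
qed

lemma emb_lookup_out:
  assumes "k \<notin> range (\<lambda>i. of_nat i * e)" shows "Poly_Mapping.lookup (emb e p) k = 0"
  unfolding emb_def lookup_sum lookup_single using assms
  by (intro sum.neutral) (auto simp: when_def)

lemma emb_eqI:
  assumes "e \<noteq> 0" 
    "\<And>k. k \<notin> range (\<lambda>i. of_nat i * e) \<Longrightarrow> Poly_Mapping.lookup f k = 0"
    "\<And>j. Poly_Mapping.lookup f (of_nat j * e) = coeff q j"
  shows "emb e q = f"
proof (rule poly_mapping_eqI)
  fix k show "Poly_Mapping.lookup (emb e q) k = Poly_Mapping.lookup f k"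
  proof (cases "k \<in> range (\<lambda>i. of_nat i * e)")
    case True then obtain j where "k = of_nat j * e" by auto
    then show ?thesis using assms emb_lookup_in by metis
  next
    case False then show ?thesis using assms emb_lookup_out by metis
  qed
qed

lemma emb_add: "e \<noteq> 0 \<Longrightarrow> emb e (p + q) = emb e p + emb e q"
  by (rule emb_eqI) (auto simp: lookup_add emb_lookup_in emb_lookup_out)

lemma emb_zero: "emb e 0 = 0"
  by (simp add: emb_def)

lemma emb_monom: "e \<noteq> 0 \<Longrightarrow> emb e (monom c i) = Poly_Mapping.single (of_nat i * e) c"
  by (rule emb_eqI) (auto simp: lookup_single when_def)

lemma emb_sum: "e \<noteq> 0 \<Longrightarrow> emb e (sum f A) = (\<Sum>x\<in>A. emb e (f x))"
  by (induction A rule: infinite_finite_induct) (auto simp: emb_zero emb_add)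

lemma emb_as_sum: "e \<noteq> 0 \<Longrightarrow> emb e p = (\<Sum>i\<le>degree p. emb e (monom (coeff p i) i))"
  by (simp add: emb_monom) (simp add: emb_def)

lemma emb_mult: assumes "e \<noteq> 0" shows "emb e (p * q) = emb e p * emb e q"
proof -
  have "emb e (p * q) = emb e ((\<Sum>i\<le>degree p. monom (coeff p i) i) * (\<Sum>j\<le>degree q. monom (coeff q j) j))"
    by (simp add: poly_as_sum_of_monoms)
  also have "\<dots> = (\<Sum>i\<le>degree p. \<Sum>j\<le>degree q. emb e (monom (coeff p i * coeff q j) (i + j)))"
    by (simp add: sum_product emb_sum assms mult_monom)
  also have "\<dots> = (\<Sum>i\<le>degree p. \<Sum>j\<le>degree q. emb e (monom (coeff p i) i) * emb e (monom (coeff q j) j))"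
    by (simp add: emb_monom assms mult_single distrib_right)
  also have "\<dots> = emb e p * emb e q"
    by (simp add: sum_product emb_as_sum[OF assms, of p] emb_as_sum[OF assms, of q])
  finally show ?thesis .
qed

lemma emb_const: "e \<noteq> 0 \<Longrightarrow> emb e [:c:] = Poly_Mapping.single 0 c"
  using emb_monom[of e c 0] by (simp add: monom_0)

lemma emb_one: "e \<noteq> 0 \<Longrightarrow> emb e 1 = 1"
  using emb_const[of e 1] by (simp add: one_pCons)

lemma emb_inj: assumes "e \<noteq> 0" "emb e p = emb e q" shows "p = q"
  by (rule poly_eqI) (metis assms emb_lookup_in)

lemma keys_emb: "Poly_Mapping.keys (emb e p) \<subseteq> range (\<lambda>i. of_nat i * e)"
  using emb_lookup_out by (fastforce simp: in_keys_iff)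

lemma emb_surj:
  assumes "e > 0" "Poly_Mapping.keys f \<subseteq> range (\<lambda>i. of_nat i * e)"
  shows "\<exists>p. f = emb e p"
proof -
  define p where "p = (\<Sum>k\<in>Poly_Mapping.keys f. monom (Poly_Mapping.lookup f k) (nat \<lfloor>k / e\<rfloor>))"
  have c: "coeff p j = Poly_Mapping.lookup f (of_nat j * e)" for j
  proof -
    have "coeff p j = (\<Sum>k\<in>Poly_Mapping.keys f. if k = of_nat j * e then Poly_Mapping.lookup f k else 0)"
      unfolding p_def coeff_sum
    proof (intro sum.cong refl)
      fix k assume "k \<in> Poly_Mapping.keys f"
      then obtain i where i: "k = of_nat i * e" using assms by auto
      have "nat \<lfloor>k / e\<rfloor> = i" using i assms by simp
      moreover have "(k = of_nat j * e) = (i = j)" using i assms by auto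
      ultimately show "coeff (monom (Poly_Mapping.lookup f k) (nat \<lfloor>k / e\<rfloor>)) j = (if k = of_nat j * e then Poly_Mapping.lookup f k else 0)"
        by simp
    qed
    also have "\<dots> = Poly_Mapping.lookup f (of_nat j * e)"
      by (simp add: in_keys_iff)
    finally show ?thesis .
  qed
  have "emb e p = f"
    by (rule emb_eqI) (use assms c in \<open>auto simp: in_keys_iff\<close>)
  then show ?thesis by auto
qed

lemma pm_nat_mult: "puiseux_monoid M \<Longrightarrow> m \<in> M \<Longrightarrow> of_nat n * m \<in> M"
  by (induction n) (auto simp: puiseux_monoid_def distrib_right)

lemma gp_add: assumes "x \<in> gp M" "y \<in> gp M" "puiseux_monoid M" shows "x + y \<in> gp M"
proof -
  obtain a b where ab: "x = a - b" "a \<in> M" "b \<in> M" using assms(1) by (auto simp: gp_def)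
  obtain c d where cd: "y = c - d" "c \<in> M" "d \<in> M" using assms(2) by (auto simp: gp_def)
  have "a + c \<in> M" "b + d \<in> M" using ab cd assms(3) by (auto simp: puiseux_monoid_def)
  moreover have "x + y = (a + c) - (b + d)" using ab cd by simp
  ultimately show ?thesis unfolding gp_def by blast
qed

lemma gp_int_mult: assumes "puiseux_monoid M" "m \<in> M" shows "of_int u * m \<in> gp M"
proof (cases "u \<ge> 0")
  case True
  have "of_int u * m = of_nat (nat u) * m - 0" using True by simp
  moreover have "0 \<in> M" using assms by (simp add: puiseux_monoid_def)
  ultimately show ?thesis using pm_nat_mult[OF assms] unfolding gp_def by blast
next
  case False
  have "of_int u * m = 0 - of_nat (nat (-u)) * m" using False by simp
  moreover have "0 \<in> M" using assms by (simp add: puiseux_monoid_def)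
  ultimately show ?thesis using pm_nat_mult[OF assms] unfolding gp_def by blast
qed

lemma refine:
  assumes M: "puiseux_monoid M" "root_closed M" and e: "e \<in> M" "e > 0" and s: "s \<in> M"
  shows "\<exists>e'. e' \<in> M \<and> e' > 0 \<and> (\<exists>k. e = of_nat k * e') \<and> (\<exists>j. s = of_nat j * e')"
proof -
  obtain p q where pq: "quotient_of (s / e) = (p, q)" by force
  have q0: "q > 0" using pq quotient_of_denom_pos by blast
  have seq: "s / e = of_int p / of_int q" using pq quotient_of_div by blast
  have cop: "coprime p q" using pq quotient_of_coprime by blast
  have s0: "s \<ge> 0" using M(1) s by (auto simp: puiseux_monoid_def)
  define e' where "e' = e / of_int q"
  have e'0: "e' > 0" using e q0 by (simp add: e'_def)
  have ee: "e = of_int q * e'" using q0 by (simp add: e'_def)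
  have se: "s = of_int p * e'" using seq e q0 by (simp add: e'_def field_simps)
  have p0: "p \<ge> 0"
  proof (rule ccontr)
    assume "\<not> p \<ge> 0" then have "of_int p * e' < 0" using e'0 by (simp add: mult_neg_pos)
    then show False using se s0 by simp
  qed
  obtain u v where uv: "u * p + v * q = gcd p q" using bezout_int by blast
  have "gcd p q = 1" using cop by simp
  with uv have "of_int u * s + of_int v * e = e'"
    by (simp add: se ee algebra_simps flip: of_int_mult of_int_add ring_distribs)
  moreover have "of_int u * s + of_int v * e \<in> gp M"
    by (intro gp_add gp_int_mult M s e)
  ultimately have "e' \<in> gp M" by simp
  moreover have "of_nat (nat q) * e' \<in> M" using ee q0 e by simp
  moreover have "nat q \<ge> 1" using q0 by simp
  ultimately have "e' \<in> M" using M(2) unfolding root_closed_def by blast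
  moreover have "e = of_nat (nat q) * e'" using ee q0 by simp
  moreover have "s = of_nat (nat p) * e'" using se p0 by simp
  ultimately show ?thesis using e'0 by blast
qed

lemma common_e:
  assumes M: "puiseux_monoid M" "root_closed M" and m0: "m0 \<in> M" "m0 > 0"
    and S: "finite S" "S \<subseteq> M"
  shows "\<exists>e. e \<in> M \<and> e > 0 \<and> S \<subseteq> range (\<lambda>i. of_nat i * e)"
  using S
proof (induction S rule: finite_induct)
  case empty then show ?case using m0 by blast
next
  case (insert s S)
  then obtain e where e: "e \<in> M" "e > 0" "S \<subseteq> range (\<lambda>i. of_nat i * e)" by auto
  obtain e' k j where e': "e' \<in> M" "e' > 0" "e = of_nat k * e'" "s = of_nat j * e'"
    using refine[OF M e(1,2), of s] insert by auto
  have "S \<subseteq> range (\<lambda>i. of_nat i * e')"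
  proof
    fix x assume "x \<in> S" then obtain i where "x = of_nat i * e" using e by auto
    then have "x = of_nat (i * k) * e'" using e' by simp
    then show "x \<in> range (\<lambda>i. of_nat i * e')" by blast
  qed
  then show ?case using e' by blast
qed

lemma unit_single:
  assumes "puiseux_monoid M" "c \<noteq> 0" shows "sg_unit M (Poly_Mapping.single 0 c :: rat \<Rightarrow>\<^sub>0 'a::field)"
proof -
  have "0 \<in> M" using assms by (simp add: puiseux_monoid_def)
  then have "Poly_Mapping.single 0 d \<in> sg_alg M" for d :: 'a by (simp add: sg_alg_def)
  moreover have "Poly_Mapping.single 0 c * Poly_Mapping.single 0 (inverse c) = (1 :: rat \<Rightarrow>\<^sub>0 'a)"
    using assms by (simp add: mult_single)
  ultimately show ?thesis unfolding sg_unit_def by blast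
qed

lemma emb_in_alg: "puiseux_monoid M \<Longrightarrow> e \<in> M \<Longrightarrow> emb e p \<in> sg_alg M"
  using keys_emb[of e p] pm_nat_mult[of M e] by (auto simp: sg_alg_def)

lemma alg_emb:
  assumes M: "puiseux_monoid M" "root_closed M" and m0: "m0 \<in> M" "m0 > 0"
    and A: "finite A" "A \<subseteq> sg_alg M"
  shows "\<exists>e. e \<in> M \<and> e > 0 \<and> (\<forall>f\<in>A. \<exists>p. f = emb e p)"
proof -
  have "finite (\<Union>f\<in>A. Poly_Mapping.keys f)" "(\<Union>f\<in>A. Poly_Mapping.keys f) \<subseteq> M"
    using A by (auto simp: sg_alg_def)
  from common_e[OF M m0 this] obtain e where e: "e \<in> M" "e > 0"
    "(\<Union>f\<in>A. Poly_Mapping.keys f) \<subseteq> range (\<lambda>i. of_nat i * e)" by blast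
  have "\<forall>f\<in>A. \<exists>p. f = emb e p"
    using e emb_surj[OF e(2)] by blast
  then show ?thesis using e by blast
qed

lemma unit_const:
  assumes M: "puiseux_monoid M" "root_closed M" and m0: "m0 \<in> M" "m0 > 0"
    and u: "sg_unit M (u :: rat \<Rightarrow>\<^sub>0 'a::field)"
  shows "\<exists>c. c \<noteq> 0 \<and> u = Poly_Mapping.single 0 c"
proof -
  obtain v where v: "v \<in> sg_alg M" "u * v = 1" "u \<in> sg_alg M" using u by (auto simp: sg_unit_def)
  obtain e where e: "e \<in> M" "e > 0" "\<forall>f\<in>{u,v}. \<exists>p. f = emb e p"
    using alg_emb[OF M m0, of "{u,v}"] v by auto
  then obtain a b where ab: "u = emb e a" "v = emb e b" by auto
  have "emb e (a * b) = emb e 1" using v ab e by (simp add: emb_mult emb_one)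
  then have "a * b = 1" using emb_inj e by (metis less_irrefl)
  then have "is_unit a" by (metis dvdI)
  then obtain c where "a = [:c:]" "c \<noteq> 0" by (auto simp: is_unit_poly_iff dvd_field_iff)
  then show ?thesis using ab e by (auto simp: emb_const)
qed

lemma irr_transfer:
  assumes M: "puiseux_monoid M" "root_closed M" and m0: "m0 \<in> M" "m0 > 0"
    and e: "e \<in> M" "e > 0" and irr: "sg_irreducible M (emb e q :: rat \<Rightarrow>\<^sub>0 'a::field)"
  shows "irreducible q"
proof (rule irreducibleI)
  have e0: "e \<noteq> 0" using e by simp
  show "q \<noteq> 0" using irr by (auto simp: sg_irreducible_def emb_zero)
  show "\<not> is_unit q"
  proof
    assume "is_unit q"
    then obtain c where "q = [:c:]" "c \<noteq> 0" by (auto simp: is_unit_poly_iff dvd_field_iff)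
    then have "sg_unit M (emb e q)" using unit_single[OF M(1)] e0 by (simp add: emb_const)
    then show False using irr by (simp add: sg_irreducible_def)
  qed
  fix a b assume qab: "q = a * b"
  have "emb e q = emb e a * emb e b" using qab e0 by (simp add: emb_mult)
  then have "sg_unit M (emb e a) \<or> sg_unit M (emb e b)"
    using irr emb_in_alg[OF M(1) e(1)] unfolding sg_irreducible_def by blast
  moreover have "is_unit x" if xu: "sg_unit M (emb e x)" for x
  proof -
    obtain c where c: "c \<noteq> 0" "emb e x = Poly_Mapping.single 0 c"
      using unit_const[OF M m0 xu] by blast
    then have "emb e x = emb e [:c:]" using e0 by (simp add: emb_const)
    then have "x = [:c:]" using emb_inj e0 by blast
    then show ?thesis using c by (simp add: is_unit_poly_iff dvd_field_iff)
  qed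
  ultimately show "is_unit a \<or> is_unit b" by blast
qed

lemma emb_prod_list: "e \<noteq> 0 \<Longrightarrow> emb e (prod_list G) = prod_list (map (emb e) G)"
  by (induction G) (auto simp: emb_one emb_mult)

context
begin

interpretation nfp:
  normalization_euclidean_semiring_multiplicative where zero = "0 :: 'a :: field poly"
    and one = 1 and plus = plus and minus = minus
    and times = times
    and normalize = "\<lambda>p. smult (inverse (lead_coeff p)) p"
    and unit_factor = "\<lambda>p. [:lead_coeff p:]"
    and euclidean_size = "\<lambda>p. if p = 0 then 0 else 2 ^ degree p"
    and divide = divide and modulo = modulo
  rewrites "dvd.dvd (times :: 'a poly \<Rightarrow> _) = Rings.dvd"
    and "comm_monoid_mult.prod_mset times 1 = prod_mset"
    and "comm_semiring_1.irreducible times 1 0 = irreducible"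
    and "comm_semiring_1.prime_elem times 1 0 = prime_elem"
proof -
  show "dvd.dvd (times :: 'a poly \<Rightarrow> _) = Rings.dvd"
    by (simp add: dvd_dict)
  show "comm_monoid_mult.prod_mset times 1 = prod_mset"
    by (simp add: prod_mset_dict)
  show "comm_semiring_1.irreducible times 1 0 = irreducible"
    by (simp add: irreducible_dict)
  show "comm_semiring_1.prime_elem times 1 0 = prime_elem"
    by (simp add: prime_elem_dict)
  show "class.normalization_euclidean_semiring_multiplicative divide plus minus (0 :: 'a poly) times 1
    modulo (\<lambda>p. if p = 0 then 0 else 2 ^ degree p)
    (\<lambda>p. [:lead_coeff p:]) (\<lambda>p. smult (inverse (lead_coeff p)) p)"
  proof (standard, fold dvd_dict)
    fix p :: "'a poly"
    show "[:lead_coeff p:] * smult (inverse (lead_coeff p)) p = p"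
      by (cases "p = 0") simp_all
  next
    fix p :: "'a poly" assume "is_unit p"
    then show "[:lead_coeff p:] = p"
      by (elim is_unit_polyE) (auto simp: monom_0 one_poly_def field_simps)
  next
    fix p :: "'a poly" assume "p \<noteq> 0"
    then show "is_unit [:lead_coeff p:]"
      by (simp add: is_unit_pCons_iff)
  next
    fix a b :: "'a poly" assume "is_unit a"
    thus "[:lead_coeff (a * b):] = a * [:lead_coeff b:]"
      by (auto elim!: is_unit_polyE)
  qed (auto simp: lead_coeff_mult Rings.div_mult_mod_eq intro!: degree_mod_less' degree_mult_right_le)
qed

definition NP :: "'a::field poly \<Rightarrow> 'a poly" where "NP p = smult (inverse (lead_coeff p)) p"

lemma NP_prod_list: "NP (prod_list G) = prod_list (map NP G)"
  unfolding NP_def by (induction G) (auto simp: nfp.normalize_mult[unfolded NP_def])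

lemma poly_ufd:
  fixes G H :: "'a::field poly list"
  assumes "\<forall>g\<in>set G. irreducible g" "\<forall>h\<in>set H. irreducible h" "prod_list G = prod_list H"
  shows "mset (map NP G) = mset (map NP H)"
proof -
  have pG: "\<And>p. p \<in># mset (map NP G) \<Longrightarrow> nfp.prime p" using assms(1)
    using field_poly_irreducible_imp_prime by (fastforce simp: NP_def)
  have pH: "\<And>p. p \<in># mset (map NP H) \<Longrightarrow> nfp.prime p" using assms(2)
    using field_poly_irreducible_imp_prime by (fastforce simp: NP_def)
  have "\<Prod>\<^sub># (mset (map NP G)) = NP (prod_list G)"
    by (metis prod_mset_prod_list NP_prod_list)
  moreover have "\<Prod>\<^sub># (mset (map NP H)) = NP (prod_list H)"
    by (metis prod_mset_prod_list NP_prod_list)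
  ultimately have eq: "\<Prod>\<^sub># (mset (map NP G)) = \<Prod>\<^sub># (mset (map NP H))" using assms(3) by simp
  have fG: "nfp.prime_factorization (\<Prod>\<^sub># (mset (map NP G))) = mset (map NP G)"
    by (rule nfp.prime_factorization_prod_mset_primes) (rule pG)
  have fH: "nfp.prime_factorization (\<Prod>\<^sub># (mset (map NP H))) = mset (map NP H)"
    by (rule nfp.prime_factorization_prod_mset_primes) (rule pH)
  have "mset (map NP G) = nfp.prime_factorization (\<Prod>\<^sub># (mset (map NP G)))" using fG by simp
  also have "\<dots> = mset (map NP H)" unfolding eq fH ..
  finally show ?thesis .
qed

lemma norm_assoc:
  fixes a b :: "'a::field poly"
  assumes "NP a = NP b" "a \<noteq> 0"
  shows "\<exists>c. c \<noteq> 0 \<and> b = [:c:] * a"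
proof -
  have "a dvd b" "b dvd a" using assms(1) unfolding NP_def by (metis nfp.dvd_normalize_iff dvd_refl)+
  then obtain k where k1: "b = a * k" by (auto elim: dvdE)
  obtain k' where k2: "a = b * k'" using \<open>b dvd a\<close> by (auto elim: dvdE)
  note k = k1 k2
  then have "a * 1 = a * (k * k')" by (metis mult.assoc mult.right_neutral)
  then have "k * k' = 1" using assms(2) by (metis mult_left_cancel)
  then have "is_unit k" by (metis dvdI)
  then obtain c where "k = [:c:]" "c \<noteq> 0" by (auto simp: is_unit_poly_iff dvd_field_iff)
  then show ?thesis using k by (auto simp: mult.commute)
qed

end


lemma no_irr:
  assumes M: "puiseux_monoid M" and np: "\<forall>m\<in>M. \<not> m > 0" and g: "sg_irreducible M (g :: rat \<Rightarrow>\<^sub>0 'a::field)"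
  shows False
proof -
  have "M \<subseteq> {0}" using M np by (force simp: puiseux_monoid_def)
  then have k: "Poly_Mapping.keys g \<subseteq> {0}" using g by (auto simp: sg_irreducible_def sg_alg_def)
  have "g = Poly_Mapping.single 0 (Poly_Mapping.lookup g 0)"
  proof (rule poly_mapping_eqI)
    fix k show "Poly_Mapping.lookup g k = Poly_Mapping.lookup (Poly_Mapping.single 0 (Poly_Mapping.lookup g 0)) k"
      using k by (cases "k = 0") (auto simp: lookup_single in_keys_iff)
  qed
  moreover have "Poly_Mapping.lookup g 0 \<noteq> 0"
    using g k by (metis calculation sg_irreducible_def single_zero)
  ultimately have "sg_unit M g" using unit_single[OF M] by metis
  then show False using g by (simp add: sg_irreducible_def)
qed

theorem mainTheorem17:
  fixes M :: "rat set" and gs hs :: "(rat \<Rightarrow>\<^sub>0 'a::field) list"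
  assumes "puiseux_monoid M" and "root_closed M"
    and "\<forall>g\<in>set gs. sg_irreducible M g"
    and "\<forall>h\<in>set hs. sg_irreducible M h"
    and "prod_list gs = prod_list hs"
  shows "length gs = length hs \<and>
    (\<exists>\<sigma>. \<sigma> permutes {..<length gs} \<and>
         (\<forall>i<length gs. sg_associated M (gs ! i) (hs ! \<sigma> i)))"
proof (cases "\<exists>m0\<in>M. m0 > 0")
  case False
  then have "gs = []" "hs = []" using no_irr[OF assms(1)] assms(3,4) by (metis list.set_intros(1) neq_Nil_conv)+
  then show ?thesis by (auto intro: permutes_id)
next
  case True
  then obtain m0 where m0: "m0 \<in> M" "m0 > 0" by blast
  note M = assms(1,2)
  have A: "finite (set gs \<union> set hs)" "set gs \<union> set hs \<subseteq> sg_alg M"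
    using assms(3,4) by (auto simp: sg_irreducible_def)
  obtain e where e: "e \<in> M" "e > 0" "\<forall>f\<in>set gs \<union> set hs. \<exists>p. f = emb e p"
    using alg_emb[OF M m0 A] by blast
  have e0: "e \<noteq> 0" using e by simp
  define ivf :: "(rat \<Rightarrow>\<^sub>0 'a) \<Rightarrow> 'a poly" where "ivf x = (SOME p. x = emb e p)" for x
  have inv: "emb e (ivf x) = x" if "x \<in> set gs \<union> set hs" for x
    using e(3) that unfolding ivf_def by (metis (mono_tags, lifting) someI_ex)
  define G where "G = map ivf gs"
  define H where "H = map ivf hs"
  have mG: "map (emb e) G = gs" using inv by (simp add: G_def map_idI)
  have mH: "map (emb e) H = hs" using inv by (simp add: H_def map_idI)
  have iG: "\<forall>g\<in>set G. irreducible g"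
  proof
    fix g assume "g \<in> set G"
    then obtain x where x: "x \<in> set gs" "g = ivf x" by (auto simp: G_def)
    then have "sg_irreducible M (emb e g)" using assms(3) inv by auto
    then show "irreducible g" using irr_transfer[OF M m0 e(1,2)] by blast
  qed
  have iH: "\<forall>h\<in>set H. irreducible h"
  proof
    fix g assume "g \<in> set H"
    then obtain x where x: "x \<in> set hs" "g = ivf x" by (auto simp: H_def)
    then have "sg_irreducible M (emb e g)" using assms(4) inv by auto
    then show "irreducible g" using irr_transfer[OF M m0 e(1,2)] by blast
  qed
  have "emb e (prod_list G) = emb e (prod_list H)"
    using assms(5) mG mH by (simp add: emb_prod_list e0)
  then have "prod_list G = prod_list H" using emb_inj e0 by blast
  then have ms: "mset (map NP G) = mset (map NP H)" using poly_ufd iG iH by blast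
  then have len: "length G = length H" by (metis length_map mset_eq_length)
  obtain p where p: "p permutes {..<length (map NP H)}" "permute_list p (map NP H) = map NP G"
    using mset_eq_permutation[OF ms] by blast
  have lgs: "length gs = length G" "length hs = length H" by (simp_all add: G_def H_def)
  have "sg_associated M (gs ! i) (hs ! p i)" if i: "i < length gs" for i
  proof -
    have pi: "p i < length H" using permutes_in_image[OF p(1)] i lgs len by simp
    have il: "i < length (map NP H)" using i lgs len by simp
    have "NP (G ! i) = map NP G ! i" using i lgs by simp
    also have "\<dots> = permute_list p (map NP H) ! i" using p(2) by simp
    also have "\<dots> = map NP H ! p i" using permute_list_nth[OF p(1) il] .
    also have "\<dots> = NP (H ! p i)" using pi by simp
    finally have "NP (G ! i) = NP (H ! p i)" .
    moreover have "G ! i \<noteq> 0" using iG i lgs nth_mem[of i G] by (auto simp: irreducible_def)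
    ultimately obtain c where c: "c \<noteq> 0" "H ! p i = [:c:] * G ! i" using norm_assoc by blast
    have "hs ! p i = map (emb e) H ! p i" using mH by simp
    also have "\<dots> = emb e (H ! p i)" using pi by simp
    also have "\<dots> = emb e [:c:] * emb e (G ! i)" using c(2) e0 emb_mult[OF e0, of "[:c:]" "G ! i"] by simp
    also have "emb e (G ! i) = map (emb e) G ! i" using i lgs by simp
    also have "\<dots> = gs ! i" using mG by simp
    finally have "hs ! p i = Poly_Mapping.single 0 c * gs ! i" using e0 by (simp add: emb_const)
    moreover have "gs ! i \<in> sg_alg M" "hs ! p i \<in> sg_alg M"
      using A i pi lgs len by auto
    ultimately show ?thesis unfolding sg_associated_def using unit_single[OF M(1) c(1)] by blast
  qed
  moreover have "p permutes {..<length gs}" using p(1) lgs len by simp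
  ultimately show ?thesis using lgs len by (intro conjI exI[of _ p]) auto
qed

end
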